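(* Let $\mathcal{S}$ be a state space, let the action space be $\mathbb{R}^D$, and let $\alpha>0$. Let $p_{\mathbf{z}}$ be a probability density on $\mathbb{R}^D$. For each state $\mathbf{s}_t\in\mathcal{S}$ let $g_\theta(\cdot\,|\,\mathbf{s}_t)=g^L_\theta\circ\cdots\circ g^1_\theta:\mathbb{R}^D\to\mathbb{R}^D$ be an invertible differentiable map with differentiable layers $g^i_\theta(\cdot\,|\,\mathbf{s}_t)$, let $\mathcal{S}_n$ be the set of indices $i$ for which $g^i_\theta$ is non-linear, write $\mathbf{a}^0=\mathbf{a}$, $\mathbf{a}^i=g^i_\theta\circ\cdots\circ g^1_\theta(\mathbf{a}|\mathbf{s}_t)$, and define $$Q_\theta(\mathbf{s}_t,\mathbf{a})=\alpha\log\Big(p_{\mathbf{z}}\big(g_\theta(\mathbf{a}|\mathbf{s}_t)\big)\prod_{i\in\mathcal{S}_n}\big|\det\mathbf{J}_{g^i_\theta}(\mathbf{a}^{i-1}|\mathbf{s}_t)\big|\Big).$$ Suppose that for each $i$, $|\det\mathbf{J}_{g^i_\theta}(\mathbf{a}^{i-1}|\mathbf{s}_t)|$ is a constant with respect to $\mathbf{a}^{i-1}$. Then $g^{-1}_\theta\big(\mathrm{argmax}_{\mathbf{z}}\,p_{\mathbf{z}}(\mathbf{z})\,\big|\,\mathbf{s}_t\big)=\mathrm{argmax}_{\mathbf{a}}\,Q_\theta(\mathbf{s}_t,\mathbf{a})$.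
   Context: $\mathbf{J}_{g^i_\theta}(\mathbf{a}^{i-1}|\mathbf{s}_t)$ denotes the Jacobian of the $i$-th layer $g^i_\theta(\cdot|\mathbf{s}_t)$ evaluated at $\mathbf{a}^{i-1}$. $g^{-1}_\theta(\cdot|\mathbf{s}_t)$ is the inverse of $g_\theta(\cdot|\mathbf{s}_t)$. Here $\mathrm{argmax}$ denotes the maximizer(s) of the given function, and $g_\theta^{-1}(\cdot|\mathbf{s}_t)$ is applied to the maximizer(s) of $p_{\mathbf{z}}$. *)

theory Defs
  imports "HOL-Analysis.Analysis"
begin

definition argmax_set :: "('a \<Rightarrow> 'b::linorder) \<Rightarrow> 'a set" where
  "argmax_set f = {x. \<forall>y. f y \<le> f x}"

definition elog :: "real \<Rightarrow> ereal" where
  "elog x = (if x > 0 then ereal (ln x) else -\<infinity>)"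

definition is_density :: "(real^'n \<Rightarrow> real) \<Rightarrow> bool" where
  "is_density p \<longleftrightarrow> (\<forall>z. 0 \<le> p z) \<and> p \<in> borel_measurable lborel
      \<and> (\<integral>\<^sup>+ z. ennreal (p z) \<partial>lborel) = 1"

text \<open>Partial compositions a^k = g^k o ... o g^1 (a | s); layers indexed 1..L.\<close>
fun partial_flow :: "(nat \<Rightarrow> 's \<Rightarrow> 'a \<Rightarrow> 'a) \<Rightarrow> 's \<Rightarrow> nat \<Rightarrow> 'a \<Rightarrow> 'a" where
  "partial_flow G s 0 = id"
| "partial_flow G s (Suc k) = G (Suc k) s \<circ> partial_flow G s k"

definition jacdet :: "(real^'n \<Rightarrow> real^'n) \<Rightarrow> real^'n \<Rightarrow> real" where
  "jacdet f x = det (matrix (frechet_derivative f (at x)))"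

definition nonlin_layers :: "(nat \<Rightarrow> 's \<Rightarrow> real^'n \<Rightarrow> real^'n) \<Rightarrow> 's \<Rightarrow> nat \<Rightarrow> nat set" where
  "nonlin_layers G s L = {i \<in> {1..L}. \<not> linear (G i s)}"

definition Qflow :: "real \<Rightarrow> (real^'n \<Rightarrow> real) \<Rightarrow> (nat \<Rightarrow> 's \<Rightarrow> real^'n \<Rightarrow> real^'n) \<Rightarrow> nat
     \<Rightarrow> 's \<Rightarrow> real^'n \<Rightarrow> ereal" where
  "Qflow \<alpha> p G L s a = ereal \<alpha> * elog (p (partial_flow G s L a) *
      (\<Prod>i\<in>nonlin_layers G s L. \<bar>jacdet (G i s) (partial_flow G s (i - 1) a)\<bar>))"

end

theory Submission imports Defs begin

lemma sard_sq:
  fixes g :: "real^'n \<Rightarrow> real^'n"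
  assumes d: "\<And>x. (g has_derivative g' x) (at x)" and z: "\<And>x. det (matrix (g' x)) = 0"
  shows "negligible (range (\<lambda>p::(real^'n) \<times> (real^'n). (g (fst p), snd p)))"
proof -
  have "DIM((real^'n) \<times> (real^'n)) = DIM(real^('n bit0))" by simp
  then obtain T :: "(real^'n) \<times> (real^'n) \<Rightarrow> real^('n bit0)" and Ti where
    T: "linear T" "linear Ti" "\<And>x. Ti (T x) = x" "\<And>y. T (Ti y) = y"
    by (metis isomorphisms_UNIV_UNIV)
  define h where "h = (\<lambda>p::(real^'n) \<times> (real^'n). (g (fst p), snd p))"
  define h' where "h' = (\<lambda>(q::(real^'n) \<times> (real^'n)) (p::(real^'n) \<times> (real^'n)). (g' (fst q) (fst p), snd p))"
  have hd: "(h has_derivative h' q) (at q)" for q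
    unfolding h_def h'_def
    by (auto intro!: derivative_eq_intros has_derivative_compose[OF _ d])
  define D where "D = (\<lambda>w. T \<circ> h' (Ti w) \<circ> Ti)"
  have lg: "linear (g' x)" for x using d has_derivative_linear by blast
  have lh: "linear (h' q)" for q using hd has_derivative_linear by blast
  have Dd: "((T \<circ> h \<circ> Ti) has_derivative D w) (at w)" for w
    unfolding D_def
    by (intro diff_chain_at hd linear_imp_has_derivative T)
  have lD: "linear (D w)" for w using Dd has_derivative_linear by blast
  have rk: "rank (matrix (D w)) < CARD('n bit0)" for w
  proof (rule ccontr)
    assume a: "\<not> ?thesis"
    have "rank (matrix (D w)) = dim (range (D w))"
      by (simp add: rank_dim_range lD)
    moreover have "dim (range (D w)) \<le> CARD('n bit0)"
      using dim_subset_UNIV[of "range (D w)"] by simp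
    ultimately have "dim (range (D w)) = DIM(real^('n bit0))" using a by simp
    hence "span (range (D w)) = UNIV" using dim_eq_full[of "range (D w)"] by simp
    moreover have "subspace (range (D w))" using lD by (simp add: subspace_UNIV linear_subspace_image)
    ultimately have full: "range (D w) = UNIV" by (metis span_eq_iff)
    have "surj (g' (fst (Ti w)))"
      unfolding surj_def
    proof
      fix u
      obtain v where "D w v = T (u, 0)" using full by (metis UNIV_I image_iff)
      hence "h' (Ti w) (Ti v) = (u, 0)" unfolding D_def using T by (metis comp_apply)
      thus "\<exists>x. u = g' (fst (Ti w)) x" unfolding h'_def by auto
    qed
    hence "inj (g' (fst (Ti w)))" using lg linear_surjective_imp_injective by blast
    thus False using z det_nz_iff_inj lg by blast
  qed
  have n1: "negligible ((T \<circ> h \<circ> Ti) ` UNIV)"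
    by (rule baby_Sard[where f' = D]) (use Dd rk has_derivative_at_withinI in auto)
  have "negligible (Ti ` ((T \<circ> h \<circ> Ti) ` UNIV))"
    by (rule negligible_differentiable_image_negligible[OF _ n1]) (auto intro: linear_imp_differentiable_on[OF T(2)])
  moreover have "Ti ` ((T \<circ> h \<circ> Ti) ` UNIV) = range h"
  proof -
    have "range Ti = UNIV" using T(3) by (metis surj_def)
    hence "Ti ` ((T \<circ> h \<circ> Ti) ` UNIV) = h ` (range Ti)"
      using T(3) by (simp add: image_image image_comp) (metis image_image)
    thus ?thesis using \<open>range Ti = UNIV\<close> by simp
  qed
  ultimately show ?thesis unfolding h_def by simp
qed


lemma neg_flow:
  fixes G :: "nat \<Rightarrow> 's \<Rightarrow> real^'n \<Rightarrow> real^'n"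
  assumes diff: "\<forall>j\<in>{1..L}. \<forall>x. G j s differentiable (at x)"
    and neg: "negligible (range (\<lambda>p::(real^'n) \<times> (real^'n). (G i s (fst p), snd p)))"
    and "1 \<le> i" "i \<le> k" "k \<le> L"
  shows "negligible (range (\<lambda>p::(real^'n) \<times> (real^'n). (partial_flow G s k (fst p), snd p)))"
  using assms(3-5)
proof (induction k)
  case 0 then show ?case by simp
next
  case (Suc k)
  show ?case
  proof (cases "i = Suc k")
    case True
    show ?thesis
    proof (rule negligible_subset[OF neg], safe)
      fix a b :: "real^'n"
      show "(partial_flow G s (Suc k) (fst (a, b)), snd (a, b)) \<in> range (\<lambda>p. (G i s (fst p), snd p))"
        using True by (simp add: image_iff) (metis fst_conv snd_conv)
    qed
  next
    case False
    hence ih: "negligible (range (\<lambda>p::(real^'n) \<times> (real^'n). (partial_flow G s k (fst p), snd p)))"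
      using Suc by simp
    have dG: "(\<lambda>p::(real^'n) \<times> (real^'n). (G (Suc k) s (fst p), snd p)) differentiable_on UNIV"
    proof -
      have dx: "\<And>x. G (Suc k) s differentiable (at x)" using diff Suc.prems by auto
      have "(\<lambda>p::(real^'n) \<times> (real^'n). G (Suc k) s (fst p)) differentiable (at q)" for q
      proof -
        have "(G (Suc k) s \<circ> fst) differentiable (at q)"
          by (rule differentiable_chain_at[OF _ dx]) (simp add: bounded_linear_imp_differentiable bounded_linear_fst)
        thus ?thesis by (simp add: comp_def)
      qed
      moreover have "(\<lambda>p::(real^'n) \<times> (real^'n). snd p) differentiable (at q)" for q
        by (simp add: bounded_linear_imp_differentiable bounded_linear_snd)
      ultimately show ?thesis unfolding differentiable_on_def
        by (auto intro!: differentiable_Pair differentiable_at_withinI)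
    qed
    have "negligible ((\<lambda>p::(real^'n) \<times> (real^'n). (G (Suc k) s (fst p), snd p)) `
             range (\<lambda>p::(real^'n) \<times> (real^'n). (partial_flow G s k (fst p), snd p)))"
      by (rule negligible_differentiable_image_negligible[OF _ ih]) (auto intro: differentiable_on_subset[OF dG])
    moreover have "(\<lambda>p::(real^'n) \<times> (real^'n). (G (Suc k) s (fst p), snd p)) `
             range (\<lambda>p::(real^'n) \<times> (real^'n). (partial_flow G s k (fst p), snd p))
         = range (\<lambda>p::(real^'n) \<times> (real^'n). (partial_flow G s (Suc k) (fst p), snd p))"
      by (simp add: image_image)
    ultimately show ?thesis by simp
  qed
qed

lemma mono_Q:
  assumes "(\<alpha>::real) > 0" "C > 0" "0 \<le> x" "0 \<le> y"
  shows "ereal \<alpha> * elog (x * C) \<le> ereal \<alpha> * elog (y * C) \<longleftrightarrow> x \<le> y"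
  using assms by (auto simp: elog_def ereal_mult_left_mono mult_pos_pos zero_less_mult_iff)


theorem proposition3p2:
  fixes \<alpha> :: real and p :: "real^'n \<Rightarrow> real"
    and G :: "nat \<Rightarrow> 's \<Rightarrow> real^'n \<Rightarrow> real^'n" and L :: nat and s :: 's
  assumes "\<alpha> > 0"
    and "is_density p"
    and "bij (partial_flow G s L)"
    and "\<forall>i\<in>{1..L}. \<forall>x. G i s differentiable (at x)"
    and "\<forall>i\<in>{1..L}. \<exists>c. \<forall>x. \<bar>jacdet (G i s) x\<bar> = c"
  shows "inv (partial_flow G s L) ` argmax_set p = argmax_set (Qflow \<alpha> p G L s)"
proof -
  define F where "F = partial_flow G s L"
  have bF: "bij F" using assms(3) F_def by simp
  have p0: "\<And>z. 0 \<le> p z" using assms(2) unfolding is_density_def by blast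
  have pos: "0 < \<bar>jacdet (G i s) x\<bar>" if i: "i \<in> {1..L}" for i x
  proof (rule ccontr)
    assume "\<not> 0 < \<bar>jacdet (G i s) x\<bar>"
    hence z0: "jacdet (G i s) x = 0" by simp
    obtain c where c: "\<forall>x. \<bar>jacdet (G i s) x\<bar> = c" using assms(5) i by blast
    have z: "\<And>y. det (matrix (frechet_derivative (G i s) (at y))) = 0"
      using c z0 unfolding jacdet_def by (metis abs_0_eq)
    have d: "\<And>y. (G i s has_derivative frechet_derivative (G i s) (at y)) (at y)"
      using assms(4) i frechet_derivative_works by blast
    have n: "negligible (range (\<lambda>p::(real^'n) \<times> (real^'n). (G i s (fst p), snd p)))"
      by (rule sard_sq[OF d z])
    have "negligible (range (\<lambda>p::(real^'n) \<times> (real^'n). (partial_flow G s L (fst p), snd p)))"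
      by (rule neg_flow[where i=i and G=G and s=s, OF assms(4) n]) (use i in auto)
    moreover have "range (\<lambda>p::(real^'n) \<times> (real^'n). (partial_flow G s L (fst p), snd p)) = UNIV"
    proof (rule surjI[where f="\<lambda>q. (inv F (fst q), snd q)"])
      fix q :: "(real^'n) \<times> (real^'n)"
      show "(partial_flow G s L (fst (inv F (fst q), snd q)), snd (inv F (fst q), snd q)) = q"
        using bF unfolding F_def by (simp add: bij_is_surj surj_f_inv_f)
    qed
    ultimately show False by simp
  qed
  define C where "C = (\<Prod>i\<in>nonlin_layers G s L. \<bar>jacdet (G i s) (partial_flow G s (i - 1) 0)\<bar>)"
  have Cpos: "C > 0" unfolding C_def
    by (rule prod_pos) (use pos in \<open>auto simp: nonlin_layers_def\<close>)
  have Ceq: "(\<Prod>i\<in>nonlin_layers G s L. \<bar>jacdet (G i s) (partial_flow G s (i - 1) a)\<bar>) = C" for a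
    unfolding C_def
  proof (rule prod.cong[OF refl])
    fix i assume "i \<in> nonlin_layers G s L"
    hence "i \<in> {1..L}" by (simp add: nonlin_layers_def)
    then obtain c where "\<forall>x. \<bar>jacdet (G i s) x\<bar> = c" using assms(5) by blast
    thus "\<bar>jacdet (G i s) (partial_flow G s (i - 1) a)\<bar> = \<bar>jacdet (G i s) (partial_flow G s (i - 1) 0)\<bar>" by simp
  qed
  have Q: "Qflow \<alpha> p G L s a = ereal \<alpha> * elog (p (F a) * C)" for a
    unfolding Qflow_def F_def Ceq ..
  have QQ: "Qflow \<alpha> p G L s b \<le> Qflow \<alpha> p G L s a \<longleftrightarrow> p (F b) \<le> p (F a)" for a b
    unfolding Q by (rule mono_Q[OF assms(1) Cpos p0 p0])
  have "a \<in> argmax_set (Qflow \<alpha> p G L s) \<longleftrightarrow> F a \<in> argmax_set p" for a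
  proof -
    have "a \<in> argmax_set (Qflow \<alpha> p G L s) \<longleftrightarrow> (\<forall>b. p (F b) \<le> p (F a))"
      unfolding argmax_set_def using QQ by simp
    also have "\<dots> \<longleftrightarrow> (\<forall>z. p z \<le> p (F a))"
      using bF by (metis bij_pointE)
    finally show ?thesis unfolding argmax_set_def by simp
  qed
  moreover have "inv F ` A = {a. F a \<in> A}" for A
    using bF by (auto simp: bij_inv_eq_iff image_iff) (metis bij_inv_eq_iff)
  ultimately show ?thesis unfolding F_def[symmetric] by auto
qed

end
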